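(* Let $A,s$ be positive integers and $(\alpha,\beta)\in(\mathbb{Z}/s\mathbb{Z})^2$, and let $S_{A,\alpha,\beta,s}=\{[A,b,a] : (a,b)\equiv(\alpha,\beta)\pmod s,\ Aa-b^2>0\}$. Let $K,L$ be $\mathbb{Z}$-lattices on the same quadratic space such that $K\prec_{A,(\alpha,\beta),s}L$, and let $\ell\in S_{A,\alpha,\beta,s}$. If $\ell$ is represented by $K$, then $\ell$ is represented by $L$. In particular, if $M\prec_{A,(\alpha,\beta),s}L$ for every $M\in\mathrm{gen}(L)$, then $\ell$ being represented by some lattice in $\mathrm{gen}(L)$ implies that $\ell$ is represented by $L$.
   Context: All $\mathbb{Z}$-lattices are free $\mathbb{Z}$-modules of finite rank with a positive definite, integral symmetric bilinear form $B$; $Q(v)=B(v,v)$. A representation $\sigma:\ell\to L$ is a linear map with $B(\sigma x,\sigma y)=B(x,y)$ for all $x,y\in\ell$; $\ell$ is represented by $L$ if one exists. $[A,b,a]$ denotes the binary lattice $\mathbb{Z}v_1+\mathbb{Z}v_2$ with $Q(v_1)=A$, $B(v_1,v_2)=b$, $Q(v_2)=a$. $\mathrm{gen}(L)$ is the set of lattices $K$ on the quadratic space $V=\mathbb{Q}L$ with $K_p\cong L_p$ (over $\mathbb{Z}_p$) for all primes $p$. $R(A,K)=\{v\in K: Q(v)=A\}$. For $\mathbb{Z}$-lattices $K,L$ on the same quadratic space $V$, $v\in R(A,K)$ and $(\alpha,\beta)\in(\mathbb{Z}/s\mathbb{Z})^2$, set $R_v(K,\alpha,\beta,s)=\{u\in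 K/sK: Q(u)\equiv\alpha,\ B(u,v)\equiv\beta \pmod s\}$ and $R_v(K,L,s)=\{\tau\in O(V):\tau(sK)\subseteq L,\ \tau(v)\in L\}$. A coset $u\in R_v(K,\alpha,\beta,s)$ is good if there is $\tau\in R_v(K,L,s)$ with $\tau(\tilde u)\in L$ for all $\tilde u\in K$ with $\tilde u\equiv u\pmod{sK}$. We write $K\prec_{A,(\alpha,\beta),s}L$ if for every $v\in R(A,K)$ every coset of $R_v(K,\alpha,\beta,s)$ is good. *)

theory Defs
  imports "HOL-Analysis.Analysis" "HOL-Computational_Algebra.Primes"
begin

text \<open>The quadratic space V is modelled as rat^'n (dimension CARD('n)) with the
  bilinear form given by a Gram matrix G.\<close>

definition bform :: "rat^'n^'n \<Rightarrow> rat^'n \<Rightarrow> rat^'n \<Rightarrow> rat" where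
  "bform G x y = (\<Sum>i\<in>UNIV. \<Sum>j\<in>UNIV. x$i * G$i$j * y$j)"

definition qform :: "rat^'n^'n \<Rightarrow> rat^'n \<Rightarrow> rat" where
  "qform G x = bform G x x"

definition pos_def_space :: "rat^'n^'n \<Rightarrow> bool" where
  "pos_def_space G \<longleftrightarrow> (\<forall>i j. G$i$j = G$j$i) \<and> (\<forall>x. x \<noteq> 0 \<longrightarrow> qform G x > 0)"

definition is_int_rat :: "rat \<Rightarrow> bool" where
  "is_int_rat q \<longleftrightarrow> (\<exists>k::int. q = of_int k)"

definition rcong :: "rat \<Rightarrow> int \<Rightarrow> int \<Rightarrow> bool" where
  "rcong x a s \<longleftrightarrow> (\<exists>k::int. x = of_int a + of_int s * of_int k)"

definition is_lattice :: "rat^'n^'n \<Rightarrow> (rat^'n) set \<Rightarrow> bool" where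
  "is_lattice G K \<longleftrightarrow>
     (\<exists>e :: 'n \<Rightarrow> rat^'n.
        (\<forall>c :: 'n \<Rightarrow> rat. (\<Sum>i\<in>UNIV. c i *s e i) = 0 \<longrightarrow> (\<forall>i. c i = 0)) \<and>
        K = {(\<Sum>i\<in>UNIV. of_int (c i) *s e i) | c :: 'n \<Rightarrow> int. True}) \<and>
     (\<forall>x\<in>K. \<forall>y\<in>K. is_int_rat (bform G x y))"

definition orth :: "rat^'n^'n \<Rightarrow> (rat^'n \<Rightarrow> rat^'n) \<Rightarrow> bool" where
  "orth G \<tau> \<longleftrightarrow> (\<forall>x y. \<tau> (x + y) = \<tau> x + \<tau> y) \<and> (\<forall>c x. \<tau> (c *s x) = c *s \<tau> x) \<and>
                  bij \<tau> \<and> (\<forall>x y. bform G (\<tau> x) (\<tau> y) = bform G x y)"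

definition R_set :: "rat^'n^'n \<Rightarrow> int \<Rightarrow> (rat^'n) set \<Rightarrow> (rat^'n) set" where
  "R_set G A K = {v\<in>K. qform G v = of_int A}"

definition smul_set :: "int \<Rightarrow> (rat^'n) set \<Rightarrow> (rat^'n) set" where
  "smul_set s K = (\<lambda>x. of_int s *s x) ` K"

definition Rv_KLs :: "rat^'n^'n \<Rightarrow> rat^'n \<Rightarrow> (rat^'n) set \<Rightarrow> (rat^'n) set \<Rightarrow> int
                      \<Rightarrow> (rat^'n \<Rightarrow> rat^'n) set" where
  "Rv_KLs G v K L s = {\<tau>. orth G \<tau> \<and> \<tau> ` smul_set s K \<subseteq> L \<and> \<tau> v \<in> L}"

text \<open>Cosets u + sK in R_v(K,alpha,beta,s), represented by u in K.\<close>
definition Rv_coset :: "rat^'n^'n \<Rightarrow> rat^'n \<Rightarrow> (rat^'n) set \<Rightarrow> int \<Rightarrow> int \<Rightarrow> int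
                      \<Rightarrow> (rat^'n) set" where
  "Rv_coset G v K \<alpha> \<beta> s = {u\<in>K. rcong (qform G u) \<alpha> s \<and> rcong (bform G u v) \<beta> s}"

definition good_coset :: "rat^'n^'n \<Rightarrow> rat^'n \<Rightarrow> (rat^'n) set \<Rightarrow> (rat^'n) set \<Rightarrow> int
                      \<Rightarrow> rat^'n \<Rightarrow> bool" where
  "good_coset G v K L s u \<longleftrightarrow>
     (\<exists>\<tau>\<in>Rv_KLs G v K L s. \<forall>w\<in>smul_set s K. \<tau> (u + w) \<in> L)"

definition prec :: "rat^'n^'n \<Rightarrow> (rat^'n) set \<Rightarrow> int \<Rightarrow> int \<Rightarrow> int \<Rightarrow> int
                      \<Rightarrow> (rat^'n) set \<Rightarrow> bool" where
  "prec G K A \<alpha> \<beta> s L \<longleftrightarrow>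
     (\<forall>v\<in>R_set G A K. \<forall>u\<in>Rv_coset G v K \<alpha> \<beta> s. good_coset G v K L s u)"

text \<open>The binary lattice [A,b,a] is represented by K: a representation is determined
  by the images x, y of the basis vectors v1, v2.\<close>
definition represents :: "rat^'n^'n \<Rightarrow> (rat^'n) set \<Rightarrow> int \<Rightarrow> int \<Rightarrow> int \<Rightarrow> bool" where
  "represents G K A b a \<longleftrightarrow>
     (\<exists>x\<in>K. \<exists>y\<in>K. qform G x = of_int A \<and> bform G x y = of_int b \<and> qform G y = of_int a)"

definition in_S :: "int \<Rightarrow> int \<Rightarrow> int \<Rightarrow> int \<Rightarrow> int \<Rightarrow> int \<Rightarrow> bool" where
  "in_S A \<alpha> \<beta> s b a \<longleftrightarrow> s dvd (a - \<alpha>) \<and> s dvd (b - \<beta>) \<and> A * a - b^2 > 0"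

definition loc :: "int \<Rightarrow> (rat^'n) set \<Rightarrow> (rat^'n) set" where
  "loc p K = {(1 / of_int d) *s x | x d. x \<in> K \<and> \<not> p dvd d}"

text \<open>Genus: K_p isometric to L_p for every prime p (realised via the Z_(p)-localisations
  and a rational isometry of V).\<close>
definition gen :: "rat^'n^'n \<Rightarrow> (rat^'n) set \<Rightarrow> (rat^'n) set set" where
  "gen G L = {K. is_lattice G K \<and>
     (\<forall>p::int. prime p \<longrightarrow> (\<exists>\<tau>. orth G \<tau> \<and> loc p (\<tau> ` L) = loc p K))}"

end

theory Submission
  imports Defs
begin

lemma bform_sym:
  assumes "\<forall>i j. G$i$j = G$j$i"
  shows "bform G x y = bform G y x"
proof -
  have "bform G x y = (\<Sum>j\<in>UNIV. \<Sum>i\<in>UNIV. x$i * G$i$j * y$j)"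
    unfolding bform_def by (rule sum.swap)
  also have "\<dots> = bform G y x"
    unfolding bform_def using assms by (intro sum.cong refl) (simp add: algebra_simps)
  finally show ?thesis .
qed

lemma zero_in_lattice:
  fixes K :: "(rat^'n) set"
  assumes "is_lattice G K"
  shows "0 \<in> K"
proof -
  from assms obtain e where K: "K = {(\<Sum>i\<in>UNIV. of_int (c i) *s e i) | c :: 'n \<Rightarrow> int. True}"
    unfolding is_lattice_def by blast
  show ?thesis unfolding K by (auto intro!: exI[of _ "\<lambda>_. 0::int"])
qed

lemma main:
  fixes G :: "rat^'n^'n" and K L :: "(rat^'n) set"
  assumes "pos_def_space G" and "is_lattice G K" and "in_S A \<alpha> \<beta> s b a"
    and "prec G K A \<alpha> \<beta> s L" and "represents G K A b a"
  shows "represents G L A b a"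
proof -
  from assms(5) obtain x y where xy: "x \<in> K" "y \<in> K" "qform G x = of_int A"
    "bform G x y = of_int b" "qform G y = of_int a" unfolding represents_def by blast
  have sym: "\<forall>i j. G$i$j = G$j$i" using assms(1) unfolding pos_def_space_def by blast
  have xR: "x \<in> R_set G A K" using xy unfolding R_set_def by blast
  from assms(3) obtain k1 k2 where k: "a - \<alpha> = s * k1" "b - \<beta> = s * k2"
    unfolding in_S_def dvd_def by blast
  have "rcong (qform G y) \<alpha> s" unfolding rcong_def xy(5)
    by (rule exI[of _ k1]) (metis k(1) diff_add_cancel add.commute of_int_add of_int_mult)
  moreover have "rcong (bform G y x) \<beta> s" unfolding rcong_def bform_sym[OF sym, of y x] xy(4)
    by (rule exI[of _ k2]) (metis k(2) diff_add_cancel add.commute of_int_add of_int_mult)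
  ultimately have yC: "y \<in> Rv_coset G x K \<alpha> \<beta> s" using xy(2) unfolding Rv_coset_def by blast
  from assms(4) xR yC have "good_coset G x K L s y" unfolding prec_def by blast
  then obtain \<tau> where t: "\<tau> \<in> Rv_KLs G x K L s" "\<forall>w\<in>smul_set s K. \<tau> (y + w) \<in> L"
    unfolding good_coset_def by blast
  have "(0::rat^'n) \<in> smul_set s K" unfolding smul_set_def
    using zero_in_lattice[OF assms(2)] by (metis image_eqI vector_smult_rzero)
  with t have ty: "\<tau> y \<in> L" by fastforce
  have tx: "\<tau> x \<in> L" and o: "orth G \<tau>" using t(1) unfolding Rv_KLs_def by auto
  have "\<forall>u v. bform G (\<tau> u) (\<tau> v) = bform G u v" using o unfolding orth_def by blast
  then show ?thesis unfolding represents_def qform_def using tx ty xy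
    unfolding qform_def by metis
qed

theorem lemma2p2:
  fixes G :: "rat^'n^'n" and K L :: "(rat^'n) set" and A s \<alpha> \<beta> b a :: int
  assumes "pos_def_space G"
    and "A > 0" and "s > 0"
    and "is_lattice G K" and "is_lattice G L"
    and "in_S A \<alpha> \<beta> s b a"
  shows "(prec G K A \<alpha> \<beta> s L \<and> represents G K A b a \<longrightarrow> represents G L A b a) \<and>
         ((\<forall>M\<in>gen G L. prec G M A \<alpha> \<beta> s L) \<and> (\<exists>M\<in>gen G L. represents G M A b a)
            \<longrightarrow> represents G L A b a)"
proof (intro conjI impI)
  assume "prec G K A \<alpha> \<beta> s L \<and> represents G K A b a"
  then show "represents G L A b a" using main assms by blast
next
  assume h: "(\<forall>M\<in>gen G L. prec G M A \<alpha> \<beta> s L) \<and> (\<exists>M\<in>gen G L. represents G M A b a)"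
  then obtain M where "M \<in> gen G L" "represents G M A b a" by blast
  moreover have "is_lattice G M" using \<open>M \<in> gen G L\<close> unfolding gen_def by blast
  ultimately show "represents G L A b a" using main assms h by blast
qed

end
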